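(* Let $\mathbf X=\{X_n\}_{n\ge1}$ and $\mathbf Y=\{Y_n\}_{n\ge1}$ be general sources. Suppose that $$\text{for every }\gamma\in\mathbb R:\qquad \lim_{n\to\infty}\mu\big(\{\delta\in[0,1): c_n^x(\delta)-c_n^y(\delta)<\gamma\}\big)=0$$ (equivalently, $\mu\text{-}\liminf_{n\to\infty}\{c_n^x(\delta)-c_n^y(\delta)\}=\infty$). Then $\mathbf X$ is an approximating source for $\mathbf Y$.
   Context: Logarithms are natural. A general source $\mathbf X=\{X_n\}_{n\ge1}$ is a sequence of random variables, $X_n$ taking values in a countable set $\mathcal X_n$, with no consistency requirements between different $n$. Similarly $Y_n$ takes values in a countable set $\mathcal Y_n$. For a random variable $Z$ on a countable set $\mathcal Z$ with pmf $P_Z$, list the elements of positive probability as $z_1,z_2,\dots$ (a finite or countably infinite list) with $P_Z(z_1)\ge P_Z(z_2)\ge\cdots$ (ties broken arbitrarily). Set $\delta_0=0$ and $\delta_k=\sum_{i\le k}P_Z(z_i)$. For $\delta\in[0,1)$ define $c^z(\delta)=\log\frac{1}{P_Z(z_k)}$, where $k$ is the unique index with $\delta\in[\delta_{k-1},\delta_k)$. Here $c_n^x$ and $c_n^y$ denote this function built from $P_{X_n}$ and from $P_{Y_n}$ respectively. The variational distance is $d(P,Q)=\sum_a|P(a)-Q(a)|$. $\mathbf X$ is an approximating source for $\mathbf Y$ if there exist deterministic maps $\phi_n:\mathcal X_n\to\mathcal Y_n$ with $\lim_{n\to\infty}d(P_{Y_n},P_{\phi_n(X_n)})=0$. $\mu$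 denotes Lebesgue measure. *)

theory Defs
  imports "HOL-Probability.Probability"
begin

text \<open>A source is modelled as a sequence of pmfs X :: nat => 'a pmf on a countable type.
  Indices are 0-based: z 0, z 1, ... correspond to the paper's z_1, z_2, ...\<close>

definition desc_enum :: "'a pmf \<Rightarrow> (nat \<Rightarrow> 'a) \<Rightarrow> nat set \<Rightarrow> bool" where
  "desc_enum p z I \<longleftrightarrow>
     (\<forall>i j. j \<in> I \<longrightarrow> i \<le> j \<longrightarrow> i \<in> I) \<and>
     bij_betw z I (set_pmf p) \<and>
     (\<forall>i\<in>I. \<forall>j\<in>I. i \<le> j \<longrightarrow> pmf p (z j) \<le> pmf p (z i))"

text \<open>The function c^z(delta) = log (1 / P(z_k)) where delta lies in [delta_{k-1}, delta_k),
  delta_k being the cumulative mass of the first k elements of the enumeration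
  (ties broken arbitrarily: any nonincreasing enumeration may be chosen).\<close>

definition cfun :: "'a pmf \<Rightarrow> real \<Rightarrow> real" where
  "cfun p \<delta> = (SOME v. \<exists>z I k. desc_enum p z I \<and> k \<in> I \<and>
      (\<Sum>i<k. pmf p (z i)) \<le> \<delta> \<and> \<delta> < (\<Sum>i<Suc k. pmf p (z i)) \<and>
      v = ln (1 / pmf p (z k)))"

definition vdist :: "'a pmf \<Rightarrow> 'a pmf \<Rightarrow> real" where
  "vdist p q = (\<Sum>\<^sub>\<infinity>a. \<bar>pmf p a - pmf q a\<bar>)"

definition approximating_source :: "(nat \<Rightarrow> 'a pmf) \<Rightarrow> (nat \<Rightarrow> 'b pmf) \<Rightarrow> bool" where
  "approximating_source X Y \<longleftrightarrow>
     (\<exists>\<phi> :: nat \<Rightarrow> 'a \<Rightarrow> 'b. (\<lambda>n. vdist (Y n) (map_pmf (\<phi> n) (X n))) \<longlonglongrightarrow> 0)"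

end

theory Submission
  imports Defs
begin


lemma measure_set_pmf_1: "measure (measure_pmf p) (set_pmf p) = 1"
  by (metis inf_top_left measure_Int_set_pmf measure_pmf_UNIV)

lemma fin_ge:
  fixes p :: "'a pmf" assumes c: "c > 0"
  shows "finite {x. pmf p x \<ge> c}"
proof (rule ccontr)
  assume inf: "infinite {x. pmf p x \<ge> c}"
  obtain n :: nat where n: "n > 1 / c" using reals_Archimedean2 by blast
  obtain F where F: "F \<subseteq> {x. pmf p x \<ge> c}" "finite F" "card F = n"
    using infinite_arbitrarily_large[OF inf] by blast
  have "real n * c = (\<Sum>x\<in>F. c)" using F by simp
  also have "\<dots> \<le> (\<Sum>x\<in>F. pmf p x)" using F by (intro sum_mono) auto
  also have "\<dots> = measure (measure_pmf p) F" using F by (simp add: measure_measure_pmf_finite)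
  also have "\<dots> \<le> 1" by simp
  finally have "real n * c \<le> 1" .
  moreover have "real n * c > 1" using n c by (simp add: field_simps)
  ultimately show False by simp
qed

lemma exists_enum:
  fixes p :: "'a::countable pmf"
  shows "\<exists>z I. desc_enum p z I"
proof -
  define S where "S = set_pmf p"
  define lt where "lt x y \<longleftrightarrow> pmf p x > pmf p y \<or> (pmf p x = pmf p y \<and> to_nat x < to_nat y)" for x y
  define pr where "pr y = {x\<in>S. lt x y}" for y
  define rk where "rk y = card (pr y)" for y
  have lt_trans: "lt x z" if "lt x y" "lt y z" for x y z
    using that unfolding lt_def by auto
  have lt_irr: "\<not> lt x x" for x unfolding lt_def by auto
  have lt_tot: "lt x y \<or> lt y x" if "x \<noteq> y" for x y
    using that inj_to_nat[where 'a='a] unfolding lt_def inj_def by (metis linorder_neqE_linordered_idom linorder_neqE_nat)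
  have lt_pmf: "lt x y \<Longrightarrow> pmf p y \<le> pmf p x" for x y unfolding lt_def by auto
  have fin: "finite (pr y)" if "y \<in> S" for y
  proof -
    have "pmf p y > 0" using that by (simp add: S_def pmf_positive)
    hence "finite {x. pmf p x \<ge> pmf p y}" by (rule fin_ge)
    moreover have "pr y \<subseteq> {x. pmf p x \<ge> pmf p y}" using lt_pmf unfolding pr_def by auto
    ultimately show ?thesis by (rule finite_subset[rotated])
  qed
  have rk_less: "rk x < rk y" if "x \<in> S" "y \<in> S" "lt x y" for x y
  proof -
    have "pr x \<subseteq> pr y" using that lt_trans unfolding pr_def by auto
    moreover have "x \<in> pr y" "x \<notin> pr x" using that lt_irr unfolding pr_def by auto
    ultimately have "pr x \<subset> pr y" by blast
    thus ?thesis unfolding rk_def using fin[OF that(2)] by (rule psubset_card_mono[rotated])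
  qed
  have inj: "inj_on rk S"
  proof (rule inj_onI)
    fix x y assume "x \<in> S" "y \<in> S" "rk x = rk y"
    thus "x = y" using rk_less lt_tot by (metis less_irrefl)
  qed
  define I where "I = rk ` S"
  define z where "z = inv_into S rk"
  have bij1: "bij_betw rk S I" using inj unfolding I_def by (simp add: bij_betw_imageI)
  have bij: "bij_betw z I S" unfolding z_def by (rule bij_betw_inv_into[OF bij1])
  have zrk: "z (rk x) = x" if "x \<in> S" for x unfolding z_def using inj that by simp
  have rkz: "rk (z i) = i" "z i \<in> S" if "i \<in> I" for i
    using that unfolding z_def I_def by (auto simp: f_inv_into_f inv_into_into)
  have down: "i \<in> I" if jI: "j \<in> I" and "i \<le> j" for i j
  proof (cases "i = j")
    case True thus ?thesis using that by simp
  next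
    case False
    hence ij: "i < j" using that by simp
    obtain y where y: "y \<in> S" "j = rk y" using jI unfolding I_def by auto
    have sub: "rk ` pr y \<subseteq> {..<j}" using rk_less y unfolding pr_def by auto
    have "card (rk ` pr y) = j" using y inj unfolding rk_def pr_def
      by (subst card_image) (auto intro: inj_on_subset)
    hence "rk ` pr y = {..<j}" using sub by (intro card_subset_eq) auto
    hence "i \<in> rk ` pr y" using ij by auto
    thus ?thesis unfolding I_def pr_def by auto
  qed
  have mono: "pmf p (z j) \<le> pmf p (z i)" if "i \<in> I" "j \<in> I" "i \<le> j" for i j
  proof (cases "z i = z j")
    case True thus ?thesis by simp
  next
    case False
    have "\<not> lt (z j) (z i)"
      using rk_less[of "z j" "z i"] rkz that by force
    hence "lt (z i) (z j)" using lt_tot False by blast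
    thus ?thesis by (rule lt_pmf)
  qed
  have "desc_enum p z I"
    unfolding desc_enum_def using down bij mono by (auto simp: S_def)
  thus ?thesis by blast
qed



lemma enum_val_le:
  assumes D: "desc_enum p z I" and D': "desc_enum p z' I'"
    and k: "k \<in> I" and k': "k' \<in> I'"
    and d1: "\<delta> < (\<Sum>i<Suc k. pmf p (z i))" and d2: "(\<Sum>i<k'. pmf p (z' i)) \<le> \<delta>"
  shows "pmf p (z k) \<le> pmf p (z' k')"
proof (rule ccontr)
  assume "\<not> ?thesis"
  hence lt: "pmf p (z' k') < pmf p (z k)" by simp
  have downI: "i \<in> I" if "i \<le> k" for i using D k that unfolding desc_enum_def by blast
  have downI': "i \<in> I'" if "i \<le> k'" for i using D' k' that unfolding desc_enum_def by blast
  have bI: "bij_betw z I (set_pmf p)" and bI': "bij_betw z' I' (set_pmf p)"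
    using D D' unfolding desc_enum_def by auto
  have sub: "z ` {..<Suc k} \<subseteq> z' ` {..<k'}"
  proof
    fix x assume "x \<in> z ` {..<Suc k}"
    then obtain i where i: "i \<le> k" "x = z i" by (auto simp: less_Suc_eq_le)
    have iI: "i \<in> I" using downI i by auto
    have "pmf p (z k) \<le> pmf p (z i)" using D iI k i unfolding desc_enum_def by blast
    have "x \<in> set_pmf p" using bI iI i by (auto simp: bij_betw_def)
    then obtain j where j: "j \<in> I'" "x = z' j" using bI' by (auto simp: bij_betw_def)
    have "j < k'"
    proof (rule ccontr)
      assume "\<not> j < k'"
      hence "pmf p (z' j) \<le> pmf p (z' k')" using D' j k' unfolding desc_enum_def by auto
      thus False using lt \<open>pmf p (z k) \<le> pmf p (z i)\<close> i j by simp
    qed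
    thus "x \<in> z' ` {..<k'}" using j by auto
  qed
  have "(\<Sum>i<Suc k. pmf p (z i)) = (\<Sum>x\<in>z ` {..<Suc k}. pmf p x)"
    using bI downI by (subst sum.reindex) (auto simp: bij_betw_def intro: inj_on_subset)
  also have "\<dots> \<le> (\<Sum>x\<in>z' ` {..<k'}. pmf p x)"
    using sub by (intro sum_mono2) auto
  also have "\<dots> = (\<Sum>i<k'. pmf p (z' i))"
    using bI' downI' by (subst sum.reindex) (auto simp: bij_betw_def intro: inj_on_subset)
  finally show False using d1 d2 by simp
qed

definition Omega :: "real set" where "Omega = {0..<1}"
definition U :: "real measure" where "U = restrict_space lborel Omega"

lemma U_prob: "prob_space U"
  unfolding U_def Omega_def by (rule prob_space_restrict_space) auto

lemma space_U: "space U = Omega"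
  unfolding U_def Omega_def by (simp add: space_restrict_space)

lemma sets_U: "A \<subseteq> Omega \<Longrightarrow> A \<in> sets borel \<Longrightarrow> A \<in> sets U"
  unfolding U_def Omega_def by (auto simp: sets_restrict_space_iff)

lemma emeasure_U: "A \<subseteq> Omega \<Longrightarrow> emeasure U A = emeasure lborel A"
  unfolding U_def Omega_def by (rule emeasure_restrict_space) auto

lemma measure_U: "A \<subseteq> Omega \<Longrightarrow> measure U A = measure lborel A"
  unfolding U_def Omega_def by (rule measure_restrict_space) auto

locale denum =
  fixes p :: "'a::countable pmf" and z :: "nat \<Rightarrow> 'a" and I :: "nat set"
  assumes D: "desc_enum p z I"
begin

definition S where "S k = (\<Sum>i<k. pmf p (z i))"

lemma down: "j \<in> I \<Longrightarrow> i \<le> j \<Longrightarrow> i \<in> I"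
  using D unfolding desc_enum_def by blast
lemma bij: "bij_betw z I (set_pmf p)"
  using D unfolding desc_enum_def by blast
lemma inj: "inj_on z I" using bij by (simp add: bij_betw_def)
lemma img: "z ` I = set_pmf p" using bij by (simp add: bij_betw_def)
lemma mono: "i \<in> I \<Longrightarrow> j \<in> I \<Longrightarrow> i \<le> j \<Longrightarrow> pmf p (z j) \<le> pmf p (z i)"
  using D unfolding desc_enum_def by blast
lemma in_set: "i \<in> I \<Longrightarrow> z i \<in> set_pmf p" using img by auto
lemma pos: "i \<in> I \<Longrightarrow> pmf p (z i) > 0" using in_set by (simp add: pmf_positive)
lemma zero_in: "0 \<in> I"
proof -
  obtain x where "x \<in> set_pmf p" using set_pmf_not_empty[of p] by blast
  then obtain j where "j \<in> I" using img by auto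
  thus ?thesis using down by blast
qed

lemma S_Suc: "S (Suc k) = S k + pmf p (z k)" by (simp add: S_def)
lemma S_0: "S 0 = 0" by (simp add: S_def)
lemma S_mono: "m \<le> n \<Longrightarrow> S m \<le> S n"
  unfolding S_def by (intro sum_mono2) auto
lemma S_nonneg: "S k \<ge> 0" unfolding S_def by (intro sum_nonneg) auto

lemma S_meas: assumes "{..<k} \<subseteq> I" shows "S k = measure (measure_pmf p) (z ` {..<k})"
proof -
  have "inj_on z {..<k}" using inj assms by (rule inj_on_subset)
  thus ?thesis unfolding S_def by (simp add: measure_measure_pmf_finite sum.reindex)
qed

lemma S_le1: assumes "k \<in> I" shows "S (Suc k) \<le> 1"
proof -
  have "{..<Suc k} \<subseteq> I" using down assms by (auto simp: less_Suc_eq_le)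
  thus ?thesis using S_meas by simp
qed

lemma cover:
  assumes "0 \<le> \<delta>" "\<delta> < 1"
  shows "\<exists>k\<in>I. \<delta> < S (Suc k)"
proof -
  define A where "A m = z ` (I \<inter> {..<m})" for m
  have inc: "incseq A" unfolding A_def incseq_def by auto
  have un: "(\<Union>m. A m) = set_pmf p" unfolding A_def using img by auto
  have "(\<lambda>m. measure (measure_pmf p) (A m)) \<longlonglongrightarrow> measure (measure_pmf p) (\<Union>m. A m)"
    by (rule measure_pmf.finite_Lim_measure_incseq) (auto simp: inc)
  hence "(\<lambda>m. measure (measure_pmf p) (A m)) \<longlonglongrightarrow> 1" using un measure_set_pmf_1[of p] by metis
  from order_tendstoD(1)[OF this assms(2)] obtain m where m: "\<delta> < measure (measure_pmf p) (A m)"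
    by (auto simp: eventually_sequentially)
  have ne: "I \<inter> {..<m} \<noteq> {}"
  proof
    assume "I \<inter> {..<m} = {}" hence "A m = {}" unfolding A_def by auto
    thus False using m assms by simp
  qed
  define k where "k = Max (I \<inter> {..<m})"
  have kI: "k \<in> I" "k < m" using ne Max_in[of "I \<inter> {..<m}"] unfolding k_def by auto
  have eq: "I \<inter> {..<m} = {..<Suc k}"
  proof
    show "I \<inter> {..<m} \<subseteq> {..<Suc k}" unfolding k_def using ne by (auto simp: less_Suc_eq_le)
    show "{..<Suc k} \<subseteq> I \<inter> {..<m}" using kI down by (auto simp: less_Suc_eq_le)
  qed
  have "S (Suc k) = measure (measure_pmf p) (A m)"
    unfolding A_def eq by (rule S_meas) (use kI down in \<open>auto simp: less_Suc_eq_le\<close>)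
  thus ?thesis using m kI by (intro bexI[of _ k]) auto
qed

definition idx where "idx \<delta> = (LEAST k. k \<in> I \<and> \<delta> < S (Suc k))"
definition Q where "Q \<delta> = z (idx \<delta>)"

lemma k_unique:
  assumes "k \<in> I" "S k \<le> \<delta>" "\<delta> < S (Suc k)" "k' \<in> I" "S k' \<le> \<delta>" "\<delta> < S (Suc k')"
  shows "k = k'"
proof (rule ccontr)
  assume "k \<noteq> k'"
  hence "Suc k \<le> k' \<or> Suc k' \<le> k" by auto
  thus False using S_mono assms by (meson le_less_trans not_le)
qed

lemma idx_props:
  assumes "\<delta> \<in> Omega"
  shows "idx \<delta> \<in> I" "S (idx \<delta>) \<le> \<delta>" "\<delta> < S (Suc (idx \<delta>))"
proof -
  have ex: "\<exists>k. k \<in> I \<and> \<delta> < S (Suc k)" using cover assms by (auto simp: Omega_def)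
  show 1: "idx \<delta> \<in> I" "\<delta> < S (Suc (idx \<delta>))"
    unfolding idx_def using LeastI_ex[OF ex] by auto
  show "S (idx \<delta>) \<le> \<delta>"
  proof (cases "idx \<delta>")
    case 0 thus ?thesis using assms S_0 by (simp add: Omega_def)
  next
    case (Suc j)
    have "j \<in> I" using 1 Suc down by auto
    have "\<not> (j \<in> I \<and> \<delta> < S (Suc j))"
      using not_less_Least[of j "\<lambda>k. k \<in> I \<and> \<delta> < S (Suc k)"] Suc unfolding idx_def by auto
    thus ?thesis using \<open>j \<in> I\<close> Suc by auto
  qed
qed

lemma idx_eq:
  assumes "\<delta> \<in> Omega" "k \<in> I" "S k \<le> \<delta>" "\<delta> < S (Suc k)"
  shows "idx \<delta> = k"
  using k_unique[OF idx_props[OF assms(1)] assms(2-4)] .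

lemma Q_in: "\<delta> \<in> Omega \<Longrightarrow> Q \<delta> \<in> set_pmf p"
  unfolding Q_def using idx_props in_set by auto

lemma cfun_eq:
  assumes k: "k \<in> I" "S k \<le> \<delta>" "\<delta> < S (Suc k)"
  shows "cfun p \<delta> = ln (1 / pmf p (z k))"
  unfolding cfun_def
proof (rule some_equality)
  show "\<exists>z' I' k'. desc_enum p z' I' \<and> k' \<in> I' \<and> (\<Sum>i<k'. pmf p (z' i)) \<le> \<delta> \<and>
      \<delta> < (\<Sum>i<Suc k'. pmf p (z' i)) \<and> ln (1 / pmf p (z k)) = ln (1 / pmf p (z' k'))"
    using D k unfolding S_def by blast
next
  fix v assume "\<exists>z' I' k'. desc_enum p z' I' \<and> k' \<in> I' \<and> (\<Sum>i<k'. pmf p (z' i)) \<le> \<delta> \<and>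
      \<delta> < (\<Sum>i<Suc k'. pmf p (z' i)) \<and> v = ln (1 / pmf p (z' k'))"
  then obtain z' I' k' where h: "desc_enum p z' I'" "k' \<in> I'" "(\<Sum>i<k'. pmf p (z' i)) \<le> \<delta>"
      "\<delta> < (\<Sum>i<Suc k'. pmf p (z' i))" "v = ln (1 / pmf p (z' k'))" by blast
  have "pmf p (z k) \<le> pmf p (z' k')"
    by (rule enum_val_le[OF D h(1) k(1) h(2)]) (use k h in \<open>auto simp: S_def\<close>)
  moreover have "pmf p (z' k') \<le> pmf p (z k)"
    by (rule enum_val_le[OF h(1) D h(2) k(1)]) (use k h in \<open>auto simp: S_def\<close>)
  ultimately show "v = ln (1 / pmf p (z k))" using h by simp
qed

lemma cfun_Q: "\<delta> \<in> Omega \<Longrightarrow> cfun p \<delta> = ln (1 / pmf p (Q \<delta>))"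
  unfolding Q_def using idx_props cfun_eq by auto

lemma preimg: "i \<in> I \<Longrightarrow> {\<delta>\<in>Omega. Q \<delta> = z i} = {S i..<S (Suc i)}"
proof safe
  fix \<delta> assume i: "i \<in> I" and d: "\<delta> \<in> Omega" "Q \<delta> = z i"
  have "idx \<delta> = i" using d idx_props[OF d(1)] inj i unfolding Q_def by (auto dest: inj_onD)
  thus "\<delta> \<in> {S i..<S (Suc i)}" using idx_props[OF d(1)] by auto
next
  fix \<delta> assume i: "i \<in> I" and d: "\<delta> \<in> {S i..<S (Suc i)}"
  thus dO: "\<delta> \<in> Omega" using S_nonneg[of i] S_le1[OF i] by (auto simp: Omega_def)
  show "Q \<delta> = z i" unfolding Q_def using idx_eq[OF dO i] d by auto
qed

lemma preimg_out: "x \<notin> set_pmf p \<Longrightarrow> {\<delta>\<in>Omega. Q \<delta> = x} = {}"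
  using Q_in by auto

lemma preimg_sets: "Q -` {x} \<inter> space U \<in> sets U"
proof -
  have e: "Q -` {x} \<inter> space U = {\<delta>\<in>Omega. Q \<delta> = x}" using space_U by auto
  show ?thesis
  proof (cases "x \<in> set_pmf p")
    case True
    then obtain i where i: "i \<in> I" "x = z i" using img by auto
    show ?thesis unfolding e unfolding i(2) preimg[OF i(1)]
      by (rule sets_U) (use preimg[OF i(1)] in auto)
  next
    case False thus ?thesis unfolding e preimg_out[OF False] by simp
  qed
qed

lemma Q_meas: "Q \<in> measurable U (count_space UNIV)"
  unfolding measurable_count_space_eq2_countable using preimg_sets by auto

lemma Q_distr: "distr U (count_space UNIV) Q = measure_pmf p"
proof (rule measure_eqI_countable[where A=UNIV])
  fix x :: 'a
  have e: "Q -` {x} \<inter> space U = {\<delta>\<in>Omega. Q \<delta> = x}" using space_U by auto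
  have "emeasure (distr U (count_space UNIV) Q) {x} = emeasure U {\<delta>\<in>Omega. Q \<delta> = x}"
    using Q_meas by (subst emeasure_distr) (auto simp: e)
  also have "\<dots> = emeasure (measure_pmf p) {x}"
  proof (cases "x \<in> set_pmf p")
    case True
    then obtain i where i: "i \<in> I" "x = z i" using img by auto
    have "emeasure U {\<delta>\<in>Omega. Q \<delta> = x} = emeasure lborel {S i..<S (Suc i)}"
      unfolding i(2) preimg[OF i(1)] by (rule emeasure_U) (use preimg[OF i(1)] in auto)
    also have "\<dots> = ennreal (pmf p x)" using i S_Suc by simp
    finally show ?thesis by (simp add: emeasure_pmf_single)
  next
    case False thus ?thesis by (simp add: preimg_out emeasure_pmf_single set_pmf_iff)
  qed
  finally show "emeasure (distr U (count_space UNIV) Q) {x} = emeasure (measure_pmf p) {x}" .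
qed (auto intro: countableI_type)

end



lemma tv_bound:
  fixes f g :: "real \<Rightarrow> 'b::countable"
  assumes fm: "f \<in> measurable U (count_space UNIV)" and gm: "g \<in> measurable U (count_space UNIV)"
    and q: "measure_pmf q = distr U (count_space UNIV) f"
    and r: "measure_pmf r = distr U (count_space UNIV) g"
  shows "vdist q r \<le> 2 * measure U {\<delta>\<in>space U. f \<delta> \<noteq> g \<delta>}"
proof -
  interpret prob_space U by (rule U_prob)
  define M where "M = {\<delta>\<in>space U. f \<delta> \<noteq> g \<delta>}"
  define A where "A b = f -` {b} \<inter> space U" for b
  define B where "B b = g -` {b} \<inter> space U" for b
  have As: "A b \<in> sets U" for b unfolding A_def using fm by (rule measurable_sets) auto
  have Bs: "B b \<in> sets U" for b unfolding B_def using gm by (rule measurable_sets) auto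
  have Ms: "M \<in> sets U"
  proof -
    have "M = (\<Union>b. A b - B b)" unfolding M_def A_def B_def by auto
    also have "\<dots> \<in> sets U" using As Bs by (intro sets.countable_UN) auto
    finally show ?thesis .
  qed
  have pq: "pmf q b = measure U (A b)" for b
    using fm by (simp add: measure_pmf_single[symmetric] q measure_distr A_def)
  have pr: "pmf r b = measure U (B b)" for b
    using gm by (simp add: measure_pmf_single[symmetric] r measure_distr B_def)
  have one: "measure U X \<le> measure U Y + measure U (X \<inter> M)"
    if "X \<in> sets U" "Y \<in> sets U" "X - Y \<subseteq> M" for X Y
  proof -
    have "measure U X \<le> measure U (Y \<union> (X \<inter> M))"
      using that Ms by (intro finite_measure_mono) auto
    also have "\<dots> \<le> measure U Y + measure U (X \<inter> M)"
      using that Ms by (intro measure_Un_le) auto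
    finally show ?thesis .
  qed
  have pt: "\<bar>pmf q b - pmf r b\<bar> \<le> measure U (A b \<inter> M) + measure U (B b \<inter> M)" for b
  proof -
    have "measure U (A b) \<le> measure U (B b) + measure U (A b \<inter> M)"
      by (rule one[OF As Bs]) (auto simp: A_def B_def M_def)
    moreover have "measure U (B b) \<le> measure U (A b) + measure U (B b \<inter> M)"
      by (rule one[OF Bs As]) (auto simp: A_def B_def M_def)
    moreover have "measure U (A b \<inter> M) \<ge> 0" "measure U (B b \<inter> M) \<ge> 0" by auto
    ultimately show ?thesis unfolding pq pr abs_le_iff by linarith
  qed
  have fin: "(\<Sum>b\<in>F. \<bar>pmf q b - pmf r b\<bar>) \<le> 2 * measure U M" if "finite F" for F
  proof -
    have dA: "disjoint_family_on (\<lambda>b. A b \<inter> M) F" unfolding disjoint_family_on_def A_def by auto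
    have dB: "disjoint_family_on (\<lambda>b. B b \<inter> M) F" unfolding disjoint_family_on_def B_def by auto
    have "(\<Sum>b\<in>F. \<bar>pmf q b - pmf r b\<bar>) \<le> (\<Sum>b\<in>F. measure U (A b \<inter> M)) + (\<Sum>b\<in>F. measure U (B b \<inter> M))"
      using pt by (simp add: sum.distrib[symmetric] sum_mono)
    also have "(\<Sum>b\<in>F. measure U (A b \<inter> M)) = measure U (\<Union>b\<in>F. A b \<inter> M)"
      using that dA As Ms by (intro finite_measure_finite_Union[symmetric]) auto
    also have "\<dots> \<le> measure U M" using Ms by (intro finite_measure_mono) auto
    also have "(\<Sum>b\<in>F. measure U (B b \<inter> M)) = measure U (\<Union>b\<in>F. B b \<inter> M)"
      using that dB Bs Ms by (intro finite_measure_finite_Union[symmetric]) auto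
    also have "\<dots> \<le> measure U M" using Ms by (intro finite_measure_mono) auto
    finally show ?thesis by simp
  qed
  have summ: "(\<lambda>b. \<bar>pmf q b - pmf r b\<bar>) summable_on UNIV"
    using fin by (intro nonneg_bdd_above_summable_on) (auto simp: bdd_above_def)
  have "vdist q r \<le> 2 * measure U M"
    unfolding vdist_def using summ fin by (rule infsum_le_finite_sums)
  thus ?thesis unfolding M_def .
qed



lemma key:
  fixes p :: "'a::countable pmf" and q :: "'b::countable pmf"
  assumes Dp: "desc_enum p z I" and Dq: "desc_enum q w J"
  shows "\<exists>\<phi>. \<forall>\<gamma>. vdist q (map_pmf \<phi> p) \<le>
           2 * (measure lborel {\<delta>\<in>{0..<1}. cfun p \<delta> - cfun q \<delta> < \<gamma>} + exp (-\<gamma>))"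
proof -
  interpret P: denum p z I by (rule denum.intro[OF Dp])
  interpret R: denum q w J by (rule denum.intro[OF Dq])
  interpret prob_space U by (rule U_prob)
  define \<phi> where "\<phi> x = R.Q (P.S (inv_into I z x))" for x
  define g where "g = \<phi> \<circ> P.Q"
  have gO: "g \<delta> = R.Q (P.S (P.idx \<delta>))" if "\<delta> \<in> Omega" for \<delta>
    unfolding g_def \<phi>_def P.Q_def using P.idx_props[OF that] P.inj by simp
  have gm: "g \<in> measurable U (count_space UNIV)"
    unfolding g_def comp_def by (rule measurable_compose[OF P.Q_meas]) simp
  have gd: "measure_pmf (map_pmf \<phi> p) = distr U (count_space UNIV) g"
    unfolding map_pmf_rep_eq P.Q_distr[symmetric] g_def
    by (subst distr_distr) (auto intro: P.Q_meas)
  have tv: "vdist q (map_pmf \<phi> p) \<le> 2 * measure U {\<delta>\<in>space U. R.Q \<delta> \<noteq> g \<delta>}"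
    by (rule tv_bound[OF R.Q_meas gm R.Q_distr[symmetric] gd])
  show ?thesis
  proof (intro exI allI)
    fix \<gamma> :: real
    define c where "c = exp (-\<gamma>)"
    define Bad where "Bad = {\<delta>\<in>{0..<1}. cfun p \<delta> - cfun q \<delta> < \<gamma>}"
    define M where "M = {\<delta>\<in>space U. R.Q \<delta> \<noteq> g \<delta>}"
    define H where "H j = (if j \<in> J then {R.S (Suc j)..<R.S (Suc j) + c * pmf q (w j)} else {})" for j
    have c0: "c > 0" unfolding c_def by simp
    have Hs: "H j \<in> sets borel" for j unfolding H_def by auto
    have UHs: "(\<Union>j. H j) \<in> sets borel" using Hs by (intro sets.countable_UN) auto
    define HO where "HO = (\<Union>j. H j) \<inter> Omega"
    have HOs: "HO \<in> sets U" unfolding HO_def using UHs by (intro sets_U) (auto simp: Omega_def)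
    define h where "h \<delta> = ln (1 / pmf p (P.Q \<delta>)) - ln (1 / pmf q (R.Q \<delta>))" for \<delta>
    have hm: "h \<in> borel_measurable U"
    proof -
      have 1: "(\<lambda>\<delta>. ln (1 / pmf p (P.Q \<delta>))) \<in> borel_measurable U"
        by (rule measurable_compose[OF P.Q_meas]) simp
      have 2: "(\<lambda>\<delta>. ln (1 / pmf q (R.Q \<delta>))) \<in> borel_measurable U"
        by (rule measurable_compose[OF R.Q_meas]) simp
      show ?thesis unfolding h_def using 1 2 by (rule borel_measurable_diff)
    qed
    have Bad_eq: "Bad = h -` {..<\<gamma>} \<inter> space U"
      unfolding Bad_def h_def space_U using P.cfun_Q R.cfun_Q by (auto simp: Omega_def)
    have Bads: "Bad \<in> sets U" unfolding Bad_eq using hm by (rule measurable_sets) auto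
    have sub: "M \<subseteq> Bad \<union> HO"
    proof
      fix \<delta> assume dM: "\<delta> \<in> M"
      hence dO: "\<delta> \<in> Omega" unfolding M_def space_U by auto
      show "\<delta> \<in> Bad \<union> HO"
      proof (cases "\<delta> \<in> Bad")
        case True thus ?thesis by simp
      next
        case False
        define i where "i = P.idx \<delta>"
        have i: "i \<in> I" "P.S i \<le> \<delta>" "\<delta> < P.S (Suc i)" using P.idx_props[OF dO] unfolding i_def by auto
        have SiO: "P.S i \<in> Omega" using i dO P.S_nonneg[of i] by (auto simp: Omega_def)
        define j where "j = R.idx (P.S i)"
        have j: "j \<in> J" "R.S j \<le> P.S i" "P.S i < R.S (Suc j)" using R.idx_props[OF SiO] unfolding j_def by auto
        define k where "k = R.idx \<delta>"
        have k: "k \<in> J" "R.S k \<le> \<delta>" "\<delta> < R.S (Suc k)" using R.idx_props[OF dO] unfolding k_def by auto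
        have "R.Q \<delta> \<noteq> g \<delta>" using dM unfolding M_def by auto
        hence "w k \<noteq> w j" unfolding gO[OF dO] R.Q_def k_def j_def i_def .
        hence kj: "k \<noteq> j" by auto
        have "\<not> k < j"
        proof
          assume "k < j"
          hence "R.S (Suc k) \<le> R.S j" by (intro R.S_mono) simp
          thus False using k j i by simp
        qed
        hence "Suc j \<le> k" using kj by simp
        hence Sj: "R.S (Suc j) \<le> \<delta>" using R.S_mono[of "Suc j" k] k by simp
        have a0: "pmf p (z i) > 0" using P.pos[OF i(1)] .
        have b0: "pmf q (w k) > 0" using R.pos[OF k(1)] .
        have "\<not> (cfun p \<delta> - cfun q \<delta> < \<gamma>)" using False dO unfolding Bad_def by (auto simp: Omega_def)
        hence "\<gamma> \<le> ln (1 / pmf p (z i)) - ln (1 / pmf q (w k))"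
          using P.cfun_eq[OF i] R.cfun_eq[OF k] by simp
        also have "\<dots> = ln (pmf q (w k) / pmf p (z i))"
          using a0 b0 by (simp add: ln_div)
        finally have "exp \<gamma> \<le> exp (ln (pmf q (w k) / pmf p (z i)))" by simp
        also have "\<dots> = pmf q (w k) / pmf p (z i)" using a0 b0 by simp
        finally have "exp \<gamma> * pmf p (z i) \<le> pmf q (w k)" using a0 by (simp add: pos_le_divide_eq)
        hence "pmf p (z i) \<le> pmf q (w k) / exp \<gamma>" by (simp add: pos_le_divide_eq mult.commute)
        hence "pmf p (z i) \<le> c * pmf q (w k)"
          unfolding c_def by (simp add: exp_minus divide_inverse mult.commute)
        also have "\<dots> \<le> c * pmf q (w j)"
          using R.mono[OF j(1) k(1)] \<open>Suc j \<le> k\<close> c0 by (intro mult_left_mono) auto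
        finally have pz: "pmf p (z i) \<le> c * pmf q (w j)" .
        have "\<delta> < R.S (Suc j) + c * pmf q (w j)"
          using i(3) j(3) pz P.S_Suc[of i] by simp
        hence "\<delta> \<in> H j" unfolding H_def using j(1) Sj by simp
        thus ?thesis unfolding HO_def using dO by auto
      qed
    qed
    have Ms: "M \<in> sets U" using sub
    proof -
      have "M = {\<delta>\<in>space U. R.Q \<delta> \<noteq> g \<delta>}" by (simp add: M_def)
      thus ?thesis using R.Q_meas gm by simp
    qed
    have "measure U M \<le> measure U (Bad \<union> HO)"
      using sub Bads HOs by (intro finite_measure_mono) auto
    also have "\<dots> \<le> measure U Bad + measure U HO"
      using Bads HOs by (intro measure_Un_le) auto
    also have "measure U Bad = measure lborel Bad"
      by (rule measure_U) (auto simp: Bad_def Omega_def)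
    also have "measure U HO \<le> c"
    proof -
      define f where "f j = (if j \<in> J then c * pmf q (w j) else 0)" for j
      have f0: "f j \<ge> 0" for j unfolding f_def using c0 by auto
      have fs: "(\<Sum>j<n. f j) \<le> c" for n
      proof -
        have "(\<Sum>j<n. f j) = (\<Sum>j\<in>J \<inter> {..<n}. c * pmf q (w j))"
          unfolding f_def by (simp add: sum.If_cases Int_commute)
        also have "\<dots> = c * (\<Sum>x\<in>w ` (J \<inter> {..<n}). pmf q x)"
          using R.inj by (simp add: sum_distrib_left sum.reindex inj_on_subset)
        also have "(\<Sum>x\<in>w ` (J \<inter> {..<n}). pmf q x) = measure (measure_pmf q) (w ` (J \<inter> {..<n}))"
          by (simp add: measure_measure_pmf_finite)
        also have "c * \<dots> \<le> c * 1" using c0 by (intro mult_left_mono) auto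
        finally show ?thesis by simp
      qed
      have fsum: "summable f" using f0 fs by (rule summableI_nonneg_bounded)
      have "emeasure lborel HO \<le> emeasure lborel (\<Union>j. H j)"
        unfolding HO_def using UHs by (intro emeasure_mono) auto
      also have "\<dots> \<le> (\<Sum>j. emeasure lborel (H j))"
        using Hs by (intro emeasure_subadditive_countably) auto
      also have "(\<Sum>j. emeasure lborel (H j)) = (\<Sum>j. ennreal (f j))"
        unfolding H_def f_def using c0 by (intro suminf_cong) auto
      also have "\<dots> = ennreal (\<Sum>j. f j)" using f0 fsum by (rule suminf_ennreal2)
      also have "\<dots> \<le> ennreal c" using fsum fs by (intro ennreal_leI suminf_le_const)
      finally have "emeasure lborel HO \<le> ennreal c" .
      hence "measure lborel HO \<le> c" unfolding measure_def using c0 by (intro enn2real_leI) auto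
      moreover have "measure U HO = measure lborel HO" by (rule measure_U) (auto simp: HO_def)
      ultimately show ?thesis by simp
    qed
    finally have "measure U M \<le> measure lborel Bad + c" by simp
    thus "vdist q (map_pmf \<phi> p) \<le> 2 * (measure lborel {\<delta>\<in>{0..<1}. cfun p \<delta> - cfun q \<delta> < \<gamma>} + exp (-\<gamma>))"
      using tv unfolding M_def Bad_def c_def by simp
  qed
qed



lemma key2:
  fixes p :: "'a::countable pmf" and q :: "'b::countable pmf"
  shows "\<exists>\<phi>. \<forall>\<gamma>. vdist q (map_pmf \<phi> p) \<le>
           2 * (measure lborel {\<delta>\<in>{0..<1}. cfun p \<delta> - cfun q \<delta> < \<gamma>} + exp (-\<gamma>))"
proof -
  obtain z I where "desc_enum p z I" using exists_enum by blast
  moreover obtain w J where "desc_enum q w J" using exists_enum by blast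
  ultimately show ?thesis by (rule key)
qed

theorem theorem1:
  fixes X :: "nat \<Rightarrow> 'a::countable pmf" and Y :: "nat \<Rightarrow> 'b::countable pmf"
  assumes "\<forall>\<gamma>::real. (\<lambda>n. measure lborel
             {\<delta> \<in> {0..<1}. cfun (X n) \<delta> - cfun (Y n) \<delta> < \<gamma>}) \<longlonglongrightarrow> 0"
  shows "approximating_source X Y"
proof -
  have "\<forall>n. \<exists>\<phi>. \<forall>\<gamma>. vdist (Y n) (map_pmf \<phi> (X n)) \<le>
      2 * (measure lborel {\<delta>\<in>{0..<1}. cfun (X n) \<delta> - cfun (Y n) \<delta> < \<gamma>} + exp (-\<gamma>))"
    using key2 by blast
  from choice[OF this] obtain \<phi> where phi0: "\<forall>n \<gamma>. vdist (Y n) (map_pmf (\<phi> n) (X n)) \<le>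
      2 * (measure lborel {\<delta>\<in>{0..<1}. cfun (X n) \<delta> - cfun (Y n) \<delta> < \<gamma>} + exp (-\<gamma>))"
    by blast
  hence phi: "\<And>n \<gamma>. vdist (Y n) (map_pmf (\<phi> n) (X n)) \<le>
      2 * (measure lborel {\<delta>\<in>{0..<1}. cfun (X n) \<delta> - cfun (Y n) \<delta> < \<gamma>} + exp (-\<gamma>))"
    by blast
  have nn: "vdist p q \<ge> 0" for p q unfolding vdist_def by (intro infsum_nonneg) auto
  have "(\<lambda>n. vdist (Y n) (map_pmf (\<phi> n) (X n))) \<longlonglongrightarrow> 0"
  proof (rule LIMSEQ_I)
    fix r :: real assume r: "r > 0"
    define \<gamma> where "\<gamma> = - ln (r / 4)"
    have eg: "exp (-\<gamma>) = r / 4" unfolding \<gamma>_def using r by simp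
    have "(\<lambda>n. measure lborel {\<delta>\<in>{0..<1}. cfun (X n) \<delta> - cfun (Y n) \<delta> < \<gamma>}) \<longlonglongrightarrow> 0"
      using assms by blast
    from order_tendstoD(2)[OF this, of "r/4"] r obtain N where
      N: "\<And>n. n \<ge> N \<Longrightarrow> measure lborel {\<delta>\<in>{0..<1}. cfun (X n) \<delta> - cfun (Y n) \<delta> < \<gamma>} < r / 4"
      by (auto simp: eventually_sequentially)
    show "\<exists>N. \<forall>n\<ge>N. norm (vdist (Y n) (map_pmf (\<phi> n) (X n)) - 0) < r"
    proof (intro exI allI impI)
      fix n assume "n \<ge> N"
      hence "vdist (Y n) (map_pmf (\<phi> n) (X n)) < r"
        using phi[of n \<gamma>] N[of n] eg by simp
      thus "norm (vdist (Y n) (map_pmf (\<phi> n) (X n)) - 0) < r" using nn[of "Y n" "map_pmf (\<phi> n) (X n)"] by simp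
    qed
  qed
  thus ?thesis unfolding approximating_source_def by blast
qed


end
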